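(* Let $f\ge 0$ with $3f<N$ and let $K\in\mathbb N$. The broadcast-process protocol described in the context is a deterministic solution to the $K$-round Marker Problem tolerating $f$ faults, with $T=3$ steps per round, message complexity $O(f+1)$ per round and signature complexity $O((f+1)^2)$ per round.
   Context: Model. There are $N$ processes $P_1,\dots,P_N$; $[N]=\{1,\dots,N\}$. Time proceeds in discrete steps $t=0,1,2,\dots$ (synchronous network). At each step every process first receives all messages sent to it at the previous step, each together with the identity of its sender, and then may send messages to any processes; the behaviour of an honest process is given by its protocol, a deterministic function of its inputs and of all messages it has received so far. Communication is authenticated: a process $P_j$ can sign a string $m$, producing $(m)_{P_j}$; every sent message is signed by its sender; no process other than $P_j$ can produce a string containing $(m)_{P_j}$ unless it copied it from a message it received, except that corrupted processes can produce signatures of any corrupted process. An $f$-adversary knows all protocols and all inputs (including future inputs), chooses at time $0$ a set of at most $f$ processes to corrupt, and makes them behave arbitrarily subject to the signature rule; the other processes are honest and follow their protocol. $\mathcal H$ denotes the set of honest processes. A protocol tolerates $f$ faults if its required properties hold against every $f$-adversary. Message complexity = number of messages sent by honest processes; signature complexity = number of signatures contained in messages sent by honest processes, counted with multiplicity (each nested signature and each repetition counts). Marker Problem ($K$ rounds of $T$ steps). Time is divided into $K$ consecutive rounds of $T$ steps. At the end of each round every honest process decides either "unmarked" or "marked, with previous marked process $d$" where $d\in[N]\cup\{\perp\}$. The marked process $M$ of round $1$ is $P_1$ if $P_1\in\mathcal H$ and $\perp$ otherwise; the marked process of round $i+1$ is the honest process that decided "marked" at the end of round $i$, or $\perp$ if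 there is none. At the beginning of round $i$, if $M\neq\perp$, $M$ receives an input $I_i\in[N]$ ("send the marker to $P_{I_i}$"). Required at the end of every round $i$: (consistency) at most one honest process decides it is marked; (liveness) if $M\in\mathcal H$, $I_i=n$ and $P_n\in\mathcal H$, then $P_n$ decides it is marked with previous marked process $M$; (non-impersonation) if $M=\perp$ and an honest process decides it is marked with previous marked process $d$, then $d\notin\mathcal H$. The message/signature complexity per round counts messages/signatures sent by honest processes during one round. Broadcast-process protocol. Fix $3f+1$ distinct processes, called broadcast processes. Each round $i$ consists of three steps. A "proof that $Q$ is marked at round $i$" is the empty string if $i=1$ and $Q=P_1$, and for $i>1$ is a collection of messages "$X$ pays $Q$ at round $i-1$" (for a single $X$) signed by at least $2f+1$ distinct broadcast processes. Step 1: the marked process $M$ with input $I_i=n$ sends the signed message "I want to pay $P_n$ at round $i$", together with its proof that it is marked at round $i$, to every broadcast process. Step 2: each honest broadcast process that received at least one such message carrying a valid proof (for round $i$) chooses one of them, say from $M$ to $P_n$, and sends the signed message "$M$ pays $P_n$ at round $i$" to $P_n$ only; it sends at most one such message per round. Step 3: a process $P_n$ that received messages "$M$ pays $P_n$ at round $i$" (same $M$) signed by at least $2f+1$ distinct broadcast processes decides that it is marked with previous marked process $M$, and keeps these messages as its proof that it is marked at round $i+1$; otherwise it decides it is unmarked. *)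

theory Defs
  imports Main
begin

text \<open>Processes are the natural numbers 1..N. WantPay n i is the statement
  "I want to pay P_n at round i"; PaysM X Q i is "X pays Q at round i".\<close>

datatype msg =
    Data nat
  | WantPay nat nat
  | PaysM nat nat nat
  | Tup "msg list"
  | Sig nat msg

primrec subterms :: "msg \<Rightarrow> msg set" where
  "subterms (Data k) = {Data k}"
| "subterms (WantPay n i) = {WantPay n i}"
| "subterms (PaysM x q i) = {PaysM x q i}"
| "subterms (Tup ms) = insert (Tup ms) (\<Union> (set (map subterms ms)))"
| "subterms (Sig j m) = insert (Sig j m) (subterms m)"

primrec nsigs :: "msg \<Rightarrow> nat" where
  "nsigs (Data k) = 0"
| "nsigs (WantPay n i) = 0"
| "nsigs (PaysM x q i) = 0"
| "nsigs (Tup ms) = sum_list (map nsigs ms)"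
| "nsigs (Sig j m) = Suc (nsigs m)"

text \<open>A sent message is a triple (sender, receiver, payload); the string actually
  transmitted is Sig sender payload (every sent message is signed by its sender).\<close>
type_synonym msgs = "(nat \<times> nat \<times> msg) set"

datatype decision = Unmarked | Marked "nat option"

definition valid_proof :: "nat \<Rightarrow> nat set \<Rightarrow> nat \<Rightarrow> nat \<Rightarrow> msg list \<Rightarrow> bool" where
  "valid_proof f B Q i prf \<longleftrightarrow>
     (i = 1 \<and> Q = 1 \<and> prf = []) \<or>
     (i > 1 \<and> (\<exists>X. (\<forall>x\<in>set prf. \<exists>b. x = Sig b (PaysM X Q (i - 1))) \<and>
                   card {b\<in>B. Sig b (PaysM X Q (i - 1)) \<in> set prf} \<ge> 2 * f + 1))"

definition pays_signers :: "nat set \<Rightarrow> msgs \<Rightarrow> nat \<Rightarrow> nat \<Rightarrow> nat \<Rightarrow> nat set" where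
  "pays_signers B S p X i = {b\<in>B. (b, p, PaysM X p i) \<in> S}"

definition decide :: "nat \<Rightarrow> nat set \<Rightarrow> msgs \<Rightarrow> nat \<Rightarrow> nat \<Rightarrow> decision" where
  "decide f B S p i =
     (if \<exists>X. card (pays_signers B S p X i) \<ge> 2 * f + 1
      then Marked (Some (SOME X. card (pays_signers B S p X i) \<ge> 2 * f + 1))
      else Unmarked)"

definition kept_proof :: "nat \<Rightarrow> nat set \<Rightarrow> msgs \<Rightarrow> nat \<Rightarrow> nat \<Rightarrow> msg list" where
  "kept_proof f B S p i =
     (let X = (SOME X. card (pays_signers B S p X i) \<ge> 2 * f + 1)
      in map (\<lambda>b. Sig b (PaysM X p i)) (sorted_list_of_set (pays_signers B S p X i)))"

text \<open>Honest processes that are marked at round i together with the proof they keep.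
  S2 is the set of messages sent at step 2 of round i-1 (received at step 3).\<close>
definition holders :: "nat \<Rightarrow> nat set \<Rightarrow> nat set \<Rightarrow> nat \<Rightarrow> msgs \<Rightarrow> (nat \<times> msg list) set" where
  "holders f B H i S2 =
     (if i = 1 then (if 1 \<in> H then {(1, [])} else {})
      else {(p, kept_proof f B S2 p (i - 1)) | p. p \<in> H \<and> decide f B S2 p (i - 1) \<noteq> Unmarked})"

definition step1_msgs :: "nat \<Rightarrow> nat set \<Rightarrow> nat set \<Rightarrow> (nat \<Rightarrow> nat) \<Rightarrow> nat \<Rightarrow> msgs \<Rightarrow> msgs" where
  "step1_msgs f B H I i S2 =
     {(h, b, Tup (WantPay (I i) i # prf)) | h b prf. (h, prf) \<in> holders f B H i S2 \<and> b \<in> B}"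

definition step2_msgs :: "nat \<Rightarrow> nat \<Rightarrow> nat set \<Rightarrow> nat set \<Rightarrow> nat \<Rightarrow> msgs \<Rightarrow> msgs" where
  "step2_msgs N f B H i S1 =
     (\<Union>b\<in>B \<inter> H.
        let cands = {(s, n). \<exists>prf. (s, b, Tup (WantPay n i # prf)) \<in> S1 \<and> n \<in> {1..N}
                                  \<and> valid_proof f B s i prf}
        in if cands = {} then {}
           else (case (SOME x. x \<in> cands) of (s, n) \<Rightarrow> {(b, n, PaysM s n i)}))"

text \<open>Messages sent by honest processes at step t (round t div 3 + 1, step t mod 3 + 1),
  given the sets S1, S2 of all messages sent at steps t-1 and t-2.\<close>
definition honest_msgs ::
  "nat \<Rightarrow> nat \<Rightarrow> nat set \<Rightarrow> (nat \<Rightarrow> nat) \<Rightarrow> nat set \<Rightarrow> nat \<Rightarrow> msgs \<Rightarrow> msgs \<Rightarrow> msgs" where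
  "honest_msgs N f B I Cor t S1 S2 =
     (let i = t div 3 + 1; H = {1..N} - Cor in
      if t mod 3 = 0 then step1_msgs f B H I i S2
      else if t mod 3 = 1 then step2_msgs N f B H i S1
      else {})"

text \<open>Execution: adv t are the messages the corrupted processes send at step t.
  run t = (messages sent at step t, messages sent at step t-1).\<close>
primrec run ::
  "nat \<Rightarrow> nat \<Rightarrow> nat set \<Rightarrow> (nat \<Rightarrow> nat) \<Rightarrow> nat set \<Rightarrow> (nat \<Rightarrow> msgs) \<Rightarrow> nat \<Rightarrow> msgs \<times> msgs" where
  "run N f B I Cor adv 0 = (honest_msgs N f B I Cor 0 {} {} \<union> adv 0, {})"
| "run N f B I Cor adv (Suc t) =
     (let (S1, S2) = run N f B I Cor adv t
      in (honest_msgs N f B I Cor (Suc t) S1 S2 \<union> adv (Suc t), S1))"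

definition sent where
  "sent N f B I Cor adv t = fst (run N f B I Cor adv t)"

text \<open>Decision of process p at the end of round i (i \<ge> 1): step 3 of round i is step
  3(i-1)+2, where p receives the messages sent at step 3(i-1)+1.\<close>
definition decision where
  "decision N f B I Cor adv i p = decide f B (sent N f B I Cor adv (3 * (i - 1) + 1)) p i"

definition honest :: "nat \<Rightarrow> nat set \<Rightarrow> nat set" where
  "honest N Cor = {1..N} - Cor"

definition marked where
  "marked N f B I Cor adv i =
     (if i = 1 then (if 1 \<in> honest N Cor then Some 1 else None)
      else if \<exists>p\<in>honest N Cor. decision N f B I Cor adv (i - 1) p \<noteq> Unmarked
      then Some (SOME p. p \<in> honest N Cor \<and> decision N f B I Cor adv (i - 1) p \<noteq> Unmarked)
      else None)"

definition adv_ok where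
  "adv_ok N f B I Cor adv \<longleftrightarrow>
     Cor \<subseteq> {1..N} \<and> card Cor \<le> f \<and>
     (\<forall>t s d m. (s, d, m) \<in> adv t \<longrightarrow>
        s \<in> Cor \<and> d \<in> {1..N} \<and>
        (\<forall>j m'. Sig j m' \<in> subterms m \<and> j \<notin> Cor \<longrightarrow>
           (\<exists>t'<t. \<exists>s' m''. (s', s, m'') \<in> sent N f B I Cor adv t' \<and>
                             Sig j m' \<in> subterms (Sig s' m''))))"

definition marker_solution where
  "marker_solution N f B I Cor adv K \<longleftrightarrow>
     (\<forall>i\<in>{1..K}.
        card {p\<in>honest N Cor. decision N f B I Cor adv i p \<noteq> Unmarked} \<le> 1 \<and>
        (\<forall>m. marked N f B I Cor adv i = Some m \<and> m \<in> honest N Cor \<and> I i \<in> honest N Cor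
              \<longrightarrow> decision N f B I Cor adv i (I i) = Marked (Some m)) \<and>
        (marked N f B I Cor adv i = None \<longrightarrow>
           (\<forall>p\<in>honest N Cor. \<forall>d. decision N f B I Cor adv i p = Marked d \<longrightarrow>
               (case d of None \<Rightarrow> True | Some x \<Rightarrow> x \<notin> honest N Cor))))"

definition round_honest_msgs where
  "round_honest_msgs N f B I Cor adv i =
     {(t, s, d, m). t \<in> {3 * (i - 1)..<3 * i} \<and> (s, d, m) \<in> sent N f B I Cor adv t
                    \<and> s \<in> honest N Cor}"

definition round_honest_sigs where
  "round_honest_sigs N f B I Cor adv i =
     (\<Sum>(t, s, d, m)\<in>round_honest_msgs N f B I Cor adv i. nsigs (Sig s m))"

definition setting_ok where
  "setting_ok N f K B I Cor adv \<longleftrightarrow>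
     3 * f < N \<and> B \<subseteq> {1..N} \<and> card B = 3 * f + 1 \<and> (\<forall>i\<in>{1..K}. I i \<in> {1..N}) \<and>
     adv_ok N f B I Cor adv"

end

theory Submission imports Defs begin

lemma quorum_inter:
  assumes "finite B" "card B = 3*f+1" "card (B \<inter> C) \<le> f"
    "A1 \<subseteq> B" "A2 \<subseteq> B" "card A1 \<ge> 2*f+1" "card A2 \<ge> 2*f+1"
  shows "\<exists>b. b \<in> A1 \<and> b \<in> A2 \<and> b \<notin> C"
proof (rule ccontr)
  assume "\<not> ?thesis"
  hence sub: "A1 \<inter> A2 \<subseteq> B \<inter> C" using assms by blast
  have f1: "finite A1" "finite A2" using assms finite_subset by auto
  have "card (A1 \<union> A2) \<le> card B" using assms by (intro card_mono) auto
  moreover have "card (A1 \<union> A2) + card (A1 \<inter> A2) = card A1 + card A2"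
    using card_Un_Int[OF f1] by simp
  moreover have "card (A1 \<inter> A2) \<le> card (B \<inter> C)" using sub assms by (intro card_mono) auto
  ultimately show False using assms by linarith
qed

lemma subterms_self: "x \<in> subterms x" by (cases x) auto

lemma sum_sig_list: "sum_list (map nsigs (map (\<lambda>b. Sig b (PaysM X Q r)) xs)) = length xs"
  by (induction xs) (auto simp: Let_def)

definition cands where
  "cands N f B i S1 b = {(s, n). \<exists>prf. (s, b, Tup (WantPay n i # prf)) \<in> S1 \<and> n \<in> {1..N}
                                  \<and> valid_proof f B s i prf}"

lemma step2_mem:
  "(b, d, m) \<in> step2_msgs N f B H i S1 \<longleftrightarrow>
    b \<in> B \<and> b \<in> H \<and> cands N f B i S1 b \<noteq> {} \<and>
    d = snd (SOME x. x \<in> cands N f B i S1 b) \<and>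
    m = PaysM (fst (SOME x. x \<in> cands N f B i S1 b)) (snd (SOME x. x \<in> cands N f B i S1 b)) i"
  unfolding step2_msgs_def cands_def[symmetric] Let_def
  by (auto simp: prod.case_eq_if split: if_splits)

lemma step1_mem:
  "(h, b, m) \<in> step1_msgs f B H I i S2 \<longleftrightarrow>
    (\<exists>prf. (h, prf) \<in> holders f B H i S2 \<and> b \<in> B \<and> m = Tup (WantPay (I i) i # prf))"
  unfolding step1_msgs_def by blast

lemma decide_marked:
  assumes "decide f B S p i \<noteq> Unmarked"
  shows "card (pays_signers B S p (SOME X. card (pays_signers B S p X i) \<ge> 2 * f + 1) i) \<ge> 2*f+1
     \<and> decide f B S p i = Marked (Some (SOME X. card (pays_signers B S p X i) \<ge> 2 * f + 1))"
proof -
  have ex: "\<exists>X. card (pays_signers B S p X i) \<ge> 2 * f + 1"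
    using assms unfolding decide_def by (auto split: if_splits)
  show ?thesis using someI_ex[OF ex] ex unfolding decide_def by simp
qed

locale ctx =
  fixes N f :: nat and B :: "nat set" and I :: "nat \<Rightarrow> nat" and Cor :: "nat set"
    and adv :: "nat \<Rightarrow> msgs"
  assumes Cor_sub: "Cor \<subseteq> {1..N}" and cardCor: "card Cor \<le> f"
    and B_sub: "B \<subseteq> {1..N}" and cardB: "card B = 3*f+1"
    and advok: "adv_ok N f B I Cor adv"
begin

abbreviation "H \<equiv> {1..N} - Cor"
abbreviation snt where "snt t \<equiv> sent N f B I Cor adv t"
definition hm where
  "hm t = honest_msgs N f B I Cor t (if t = 0 then {} else snt (t-1)) (if t < 2 then {} else snt (t-2))"

lemma finB: "finite B" using cardB card.infinite by fastforce
lemma cardBC: "card (B \<inter> Cor) \<le> f"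
  using cardCor Cor_sub by (meson card_mono finite_atLeastAtMost finite_subset inf_le2 le_trans)

lemma sent_eq: "snt t = hm t \<union> adv t"
proof (cases t)
  case 0 then show ?thesis by (simp add: sent_def hm_def)
next
  case (Suc t')
  show ?thesis
  proof (cases t')
    case 0 then show ?thesis using Suc by (simp add: sent_def hm_def split: prod.splits)
  next
    case (Suc t'')
    have "snd (run N f B I Cor adv (Suc t'')) = snt t''"
      by (simp add: sent_def split: prod.splits)
    then show ?thesis using \<open>t = Suc t'\<close> Suc by (simp add: sent_def hm_def split: prod.splits)
  qed
qed

lemma adv_sender: "(s, d, m) \<in> adv t \<Longrightarrow> s \<in> Cor"
  using advok unfolding adv_ok_def by blast

lemma honest_sent: "(s, d, m) \<in> snt t \<Longrightarrow> s \<notin> Cor \<Longrightarrow> (s, d, m) \<in> hm t"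
  using sent_eq adv_sender by blast

lemma hm_sent: "x \<in> hm t \<Longrightarrow> x \<in> snt t"
  using sent_eq by blast

lemma hm0: "t mod 3 = 0 \<Longrightarrow> hm t = step1_msgs f B H I (t div 3 + 1) (if t < 2 then {} else snt (t-2))"
  unfolding hm_def honest_msgs_def Let_def by simp

lemma hm1: "t mod 3 = 1 \<Longrightarrow> hm t = step2_msgs N f B H (t div 3 + 1) (snt (t-1))"
  unfolding hm_def honest_msgs_def Let_def by auto

lemma hm2: "t mod 3 = 2 \<Longrightarrow> hm t = {}"
  unfolding hm_def honest_msgs_def Let_def by auto

end
context ctx begin

lemma uniq_step2:
  assumes "t mod 3 = 1" "(b, d, m) \<in> snt t" "(b, d', m') \<in> snt t" "b \<notin> Cor"
  shows "d = d' \<and> m = m'"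
proof -
  have "(b, d, m) \<in> hm t" "(b, d', m') \<in> hm t" using assms honest_sent by auto
  then show ?thesis using hm1[OF assms(1)] step2_mem by auto
qed

lemma pays_round:
  assumes "(b, Q, PaysM X Q r) \<in> snt t" "b \<notin> Cor"
  shows "t = 3*(r-1)+1 \<and> r \<ge> 1 \<and> b \<in> B"
proof -
  have h: "(b, Q, PaysM X Q r) \<in> hm t" using assms honest_sent by auto
  have "t mod 3 = 0 \<or> t mod 3 = 1 \<or> t mod 3 = 2" by presburger
  moreover have "t mod 3 \<noteq> 0" using h hm0 step1_mem by fastforce
  moreover have "t mod 3 \<noteq> 2" using h hm2 by auto
  ultimately have t1: "t mod 3 = 1" by blast
  then have "r = t div 3 + 1 \<and> b \<in> B" using h hm1 step2_mem by auto
  then show ?thesis using t1 by presburger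
qed

lemma holders_elem:
  assumes "a \<in> holders f B H i S2" "i \<noteq> 1"
  shows "\<exists>p. a = (p, kept_proof f B S2 p (i - 1)) \<and> p \<in> H \<and> decide f B S2 p (i-1) \<noteq> Unmarked"
  using assms unfolding holders_def by auto

lemma kept_set:
  "x \<in> set (kept_proof f B S2 p i) \<Longrightarrow>
    \<exists>b X. x = Sig b (PaysM X p i) \<and> (b, p, PaysM X p i) \<in> S2"
  unfolding kept_proof_def Let_def pays_signers_def
  using finB by auto

lemma inv:
  "(s, d, m) \<in> snt t \<Longrightarrow> Sig b (PaysM X Q r) \<in> subterms (Sig s m) \<Longrightarrow> b \<notin> Cor
   \<Longrightarrow> \<exists>t'. (b, Q, PaysM X Q r) \<in> snt t'"
proof (induction t arbitrary: s d m rule: less_induct)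
  case (less t)
  show ?case
  proof (cases "(s, d, m) \<in> adv t")
    case True
    then have "s \<in> Cor" by (rule adv_sender)
    then have "Sig b (PaysM X Q r) \<in> subterms m" using less.prems by auto
    then obtain t' s' m'' where "t' < t" "(s', s, m'') \<in> snt t'"
      "Sig b (PaysM X Q r) \<in> subterms (Sig s' m'')"
      using advok True less.prems(3) unfolding adv_ok_def by blast
    then show ?thesis using less.IH less.prems(3) by blast
  next
    case False
    then have h: "(s, d, m) \<in> hm t" using less.prems sent_eq False by blast
    have "t mod 3 = 0 \<or> t mod 3 = 1 \<or> t mod 3 = 2" by presburger
    moreover {
      assume t0: "t mod 3 = 0"
      then obtain pr where hp: "(s, pr) \<in> holders f B H (t div 3 + 1) (if t < 2 then {} else snt (t-2))"
        and m: "m = Tup (WantPay (I (t div 3 + 1)) (t div 3 + 1) # pr)"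
        using h unfolding hm0[OF t0] step1_mem by blast
      from less.prems(2) obtain x where x: "x \<in> set pr" "Sig b (PaysM X Q r) \<in> subterms x"
        unfolding m by auto
      have "t div 3 + 1 \<noteq> 1"
        using hp x unfolding holders_def by (auto split: if_splits)
      then obtain p where "(s, pr) = (p, kept_proof f B (if t < 2 then {} else snt (t-2)) p (t div 3 + 1 - 1))"
        using holders_elem[OF hp] by blast
      then have "x \<in> set (kept_proof f B (if t < 2 then {} else snt (t-2)) s (t div 3))"
        using x by auto
      then obtain b' X' where "x = Sig b' (PaysM X' s (t div 3))"
        "(b', s, PaysM X' s (t div 3)) \<in> (if t < 2 then {} else snt (t-2))"
        using kept_set by blast
      then have ?thesis using x by (auto split: if_splits)
    }
    moreover {
      assume t1: "t mod 3 = 1"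
      then obtain X' where "m = PaysM X' d (t div 3 + 1)" using h unfolding hm1[OF t1] step2_mem by blast
      then have ?thesis using less.prems by auto
    }
    moreover have "t mod 3 \<noteq> 2" using h hm2 by auto
    ultimately show ?thesis by meson
  qed
qed

lemma decided_unique:
  assumes "t mod 3 = 1" "decide f B (snt t) p j \<noteq> Unmarked" "decide f B (snt t) q j \<noteq> Unmarked"
  shows "p = q"
proof -
  obtain X where X: "card (pays_signers B (snt t) p X j) \<ge> 2*f+1"
    using assms(2) unfolding decide_def by (auto split: if_splits)
  obtain Y where Y: "card (pays_signers B (snt t) q Y j) \<ge> 2*f+1"
    using assms(3) unfolding decide_def by (auto split: if_splits)
  obtain b where "b \<in> pays_signers B (snt t) p X j" "b \<in> pays_signers B (snt t) q Y j" "b \<notin> Cor"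
    using quorum_inter[OF finB cardB cardBC _ _ X Y] unfolding pays_signers_def by blast
  then show ?thesis using uniq_step2[OF assms(1)] unfolding pays_signers_def by blast
qed

lemma holders_unique:
  assumes "i = 1 \<or> (\<exists>t. S2 = snt t \<and> t mod 3 = 1)"
    "a \<in> holders f B H i S2" "a' \<in> holders f B H i S2"
  shows "a = a'"
proof (cases "i = 1")
  case True then show ?thesis using assms unfolding holders_def by (auto split: if_splits)
next
  case False
  then obtain t where t: "S2 = snt t" "t mod 3 = 1" using assms by blast
  obtain p where p: "a = (p, kept_proof f B S2 p (i - 1))" "decide f B S2 p (i-1) \<noteq> Unmarked"
    using holders_elem[OF assms(2) False] by blast
  obtain q where q: "a' = (q, kept_proof f B S2 q (i - 1))" "decide f B S2 q (i-1) \<noteq> Unmarked"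
    using holders_elem[OF assms(3) False] by blast
  have "p = q" using decided_unique[of t p "i-1" q] t p q by simp
  then show ?thesis using p q by simp
qed

end
context ctx begin

lemma decision_eq: "decision N f B I Cor adv i p = decide f B (snt (3 * (i - 1) + 1)) p i"
  unfolding decision_def ..

lemma consistency:
  "card {p\<in>honest N Cor. decision N f B I Cor adv i p \<noteq> Unmarked} \<le> 1"
proof -
  have fin: "finite {p\<in>honest N Cor. decision N f B I Cor adv i p \<noteq> Unmarked}"
    unfolding honest_def by auto
  have md: "(3 * (i - 1) + 1) mod 3 = 1" by simp
  have "card {p\<in>honest N Cor. decision N f B I Cor adv i p \<noteq> Unmarked} \<le> Suc 0"
    unfolding card_le_Suc0_iff_eq[OF fin]
    using decided_unique[OF md] unfolding decision_eq by blast
  then show ?thesis by simp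
qed

lemma marked_prev:
  assumes "i \<noteq> 1" "marked N f B I Cor adv i = Some m"
  shows "m \<in> H \<and> decide f B (snt (3 * (i - 2) + 1)) m (i - 1) \<noteq> Unmarked"
proof -
  have ex: "\<exists>p. p \<in> honest N Cor \<and> decision N f B I Cor adv (i - 1) p \<noteq> Unmarked"
    using assms unfolding marked_def by (auto split: if_splits)
  have "m = (SOME p. p \<in> honest N Cor \<and> decision N f B I Cor adv (i - 1) p \<noteq> Unmarked)"
    using assms unfolding marked_def by (auto split: if_splits)
  then have "m \<in> honest N Cor \<and> decision N f B I Cor adv (i - 1) m \<noteq> Unmarked"
    using someI_ex[OF ex] by simp
  moreover have "3 * (i - 1 - 1) + 1 = 3 * (i - 2) + 1" by simp
  ultimately show ?thesis unfolding decision_eq honest_def by simp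
qed

end

lemma kept_valid:
  assumes "finite B" "decide f B S p j \<noteq> Unmarked" "j \<noteq> 0"
  shows "valid_proof f B p (Suc j) (kept_proof f B S p j)"
proof -
  define X0 where "X0 = (SOME X. card (pays_signers B S p X j) \<ge> 2 * f + 1)"
  define PS where "PS = pays_signers B S p X0 j"
  have c: "card PS \<ge> 2*f+1" using decide_marked[OF assms(2)] unfolding PS_def X0_def by blast
  have sub: "PS \<subseteq> B" unfolding PS_def pays_signers_def by auto
  have fin: "finite PS" using sub assms(1) finite_subset by blast
  have k: "kept_proof f B S p j = map (\<lambda>b. Sig b (PaysM X0 p j)) (sorted_list_of_set PS)"
    unfolding kept_proof_def Let_def X0_def PS_def ..
  have st: "set (kept_proof f B S p j) = (\<lambda>b. Sig b (PaysM X0 p j)) ` PS"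
    unfolding k using fin by simp
  have "{b\<in>B. Sig b (PaysM X0 p (Suc j - 1)) \<in> set (kept_proof f B S p j)} = PS"
    unfolding st using sub by auto
  then show ?thesis unfolding valid_proof_def using c st assms(3) by auto
qed

context ctx begin

lemma t0_facts:
  fixes i :: nat
  assumes "i \<ge> 1"
  shows "(3*(i-1)) mod 3 = 0" "(3*(i-1)) div 3 + 1 = i" "(3*(i-1)+1) mod 3 = 1"
    "(3*(i-1)+1) div 3 + 1 = i" "3*(i-1)+1-1 = 3*(i-1)"
    "i \<noteq> 1 \<Longrightarrow> \<not> 3*(i-1) < 2 \<and> 3*(i-1) - 2 = 3*(i-2)+1 \<and> (3*(i-2)+1) mod 3 = 1"
  using assms by auto

lemma holders_unique_round:
  assumes "i \<ge> 1" "a \<in> holders f B H i (if 3*(i-1) < 2 then {} else snt (3*(i-1)-2))"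
    "a' \<in> holders f B H i (if 3*(i-1) < 2 then {} else snt (3*(i-1)-2))"
  shows "a = a'"
proof -
  have "i = 1 \<or> (\<exists>t. (if 3*(i-1) < 2 then {} else snt (3*(i-1)-2)) = snt t \<and> t mod 3 = 1)"
  proof (cases "i = 1")
    case False
    then have "(if 3*(i-1) < 2 then {} else snt (3*(i-1)-2)) = snt (3*(i-2)+1)" "(3*(i-2)+1) mod 3 = 1"
      using t0_facts(6)[OF assms(1)] by auto
    then show ?thesis by blast
  qed simp
  from holders_unique[OF this assms(2,3)] show ?thesis .
qed

lemma liveness:
  assumes i1: "i \<ge> 1" and mk: "marked N f B I Cor adv i = Some m" and mH: "m \<in> H"
    and IiH: "I i \<in> H"
  shows "decision N f B I Cor adv i (I i) = Marked (Some m)"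
proof -
  define t0 where "t0 = 3*(i-1)"
  define S2 where "S2 = (if t0 < 2 then {} else snt (t0-2))"
  have hm_t0: "hm t0 = step1_msgs f B H I i S2"
    using hm0[OF t0_facts(1)[OF i1]] t0_facts(2)[OF i1] unfolding S2_def t0_def by simp
  have hU: "\<And>a a'. a \<in> holders f B H i S2 \<Longrightarrow> a' \<in> holders f B H i S2 \<Longrightarrow> a = a'"
    using holders_unique_round[OF i1] unfolding S2_def t0_def by blast
  have S2eq: "i \<noteq> 1 \<Longrightarrow> S2 = snt (3*(i-2)+1)"
    using t0_facts(6)[OF i1] unfolding S2_def t0_def by simp
  obtain pm where pm: "(m, pm) \<in> holders f B H i S2" "valid_proof f B m i pm"
  proof (cases "i = 1")
    case True
    then have "m = 1" "1 \<in> H" using mk unfolding marked_def honest_def by (auto split: if_splits)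
    then show ?thesis using that[of "[]"] True unfolding holders_def valid_proof_def by simp
  next
    case False
    have d: "decide f B S2 m (i - 1) \<noteq> Unmarked"
      using marked_prev[OF False mk] S2eq[OF False] by simp
    have "(m, kept_proof f B S2 m (i-1)) \<in> holders f B H i S2"
      unfolding holders_def using False d mH by auto
    moreover have "valid_proof f B m i (kept_proof f B S2 m (i-1))"
    proof -
      have "i - 1 \<noteq> 0" "Suc (i - 1) = i" using False i1 by auto
      then show ?thesis using kept_valid[OF finB d] by metis
    qed
    ultimately show ?thesis using that by blast
  qed
  have cands: "cands N f B i (snt t0) b = {(m, I i)}" if bB: "b \<in> B" and bH: "b \<in> H" for b
  proof
    have "(m, b, Tup (WantPay (I i) i # pm)) \<in> hm t0" unfolding hm_t0 step1_mem using pm bB by blast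
    then have "(m, b, Tup (WantPay (I i) i # pm)) \<in> snt t0" by (rule hm_sent)
    then show "{(m, I i)} \<subseteq> cands N f B i (snt t0) b"
      unfolding cands_def using pm IiH by auto
  next
    show "cands N f B i (snt t0) b \<subseteq> {(m, I i)}"
    proof
      fix x assume "x \<in> cands N f B i (snt t0) b"
      then obtain s n pr where x: "x = (s, n)" and msg: "(s, b, Tup (WantPay n i # pr)) \<in> snt t0"
        and vp: "valid_proof f B s i pr"
        unfolding cands_def by blast
      show "x \<in> {(m, I i)}"
      proof (cases "s \<in> Cor")
        case False
        then have "(s, b, Tup (WantPay n i # pr)) \<in> hm t0" using msg honest_sent by blast
        then obtain pr' where "(s, pr') \<in> holders f B H i S2" "Tup (WantPay n i # pr) = Tup (WantPay (I i) i # pr')"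
          unfolding hm_t0 step1_mem by blast
        then show ?thesis using hU[OF _ pm(1)] x by auto
      next
        case sC: True
        show ?thesis
        proof (cases "i = 1")
          case True
          then have "s = 1" using vp unfolding valid_proof_def by auto
          moreover have "m = 1" using mk True unfolding marked_def by (auto split: if_splits)
          ultimately show ?thesis using sC mH by auto
        next
          case False
          obtain X where X1: "card {b\<in>B. Sig b (PaysM X s (i - 1)) \<in> set pr} \<ge> 2 * f + 1"
            using vp False unfolding valid_proof_def by auto
          have d: "decide f B (snt (3*(i-2)+1)) m (i - 1) \<noteq> Unmarked"
            using marked_prev[OF False mk] by simp
          obtain Y where Y: "card (pays_signers B (snt (3*(i-2)+1)) m Y (i-1)) \<ge> 2*f+1"
            using d unfolding decide_def by (auto split: if_splits)
          obtain b' where b': "b' \<in> {b\<in>B. Sig b (PaysM X s (i - 1)) \<in> set pr}"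
            "b' \<in> pays_signers B (snt (3*(i-2)+1)) m Y (i-1)" "b' \<notin> Cor"
            using quorum_inter[OF finB cardB cardBC _ _ X1 Y] unfolding pays_signers_def by blast
          have "Sig b' (PaysM X s (i - 1)) \<in> subterms (Sig s (Tup (WantPay n i # pr)))"
            using b'(1) subterms_self by fastforce
          then obtain t' where t': "(b', s, PaysM X s (i - 1)) \<in> snt t'"
            using inv[OF msg] b'(3) by blast
          have "t' = 3*(i-2)+1" using pays_round[OF t' b'(3)] by simp
          moreover have "(b', m, PaysM Y m (i-1)) \<in> snt (3*(i-2)+1)"
            using b'(2) unfolding pays_signers_def by blast
          moreover have "(3*(i-2)+1) mod 3 = 1" by simp
          ultimately have "s = m" using uniq_step2 t' b'(3) by blast
          then show ?thesis using sC mH by auto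
        qed
      qed
    qed
  qed
  define t1 where "t1 = 3*(i-1)+1"
  have hm_t1: "hm t1 = step2_msgs N f B H i (snt t0)"
    using hm1[OF t0_facts(3)[OF i1]] t0_facts(4,5)[OF i1] unfolding t1_def t0_def by simp
  have hp: "(b, I i, PaysM m (I i) i) \<in> snt t1" if "b \<in> B" "b \<notin> Cor" for b
  proof -
    have bH: "b \<in> H" using that B_sub by auto
    have "(b, I i, PaysM m (I i) i) \<in> hm t1"
      unfolding hm_t1 step2_mem cands[OF that(1) bH] using that bH by simp
    then show ?thesis by (rule hm_sent)
  qed
  have t1m: "t1 mod 3 = 1" unfolding t1_def by simp
  have PSsub: "pays_signers B (snt t1) (I i) X i \<subseteq> B" for X unfolding pays_signers_def by auto
  have "B - Cor \<subseteq> pays_signers B (snt t1) (I i) m i" unfolding pays_signers_def using hp by auto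
  moreover have "card (B - Cor) \<ge> 2*f+1"
    using card_Diff_subset_Int[of B Cor] finB cardB cardBC by simp
  ultimately have cm: "card (pays_signers B (snt t1) (I i) m i) \<ge> 2*f+1"
    using card_mono[OF finite_subset[OF PSsub finB]] by (meson le_trans)
  have un: "X = m" if cX: "card (pays_signers B (snt t1) (I i) X i) \<ge> 2*f+1" for X
  proof -
    obtain b where "b \<in> pays_signers B (snt t1) (I i) X i" "b \<notin> Cor"
      using quorum_inter[OF finB cardB cardBC PSsub PSsub cX cX] by blast
    then have "(b, I i, PaysM X (I i) i) \<in> snt t1" "(b, I i, PaysM m (I i) i) \<in> snt t1" "b \<notin> Cor"
      using hp unfolding pays_signers_def by auto
    then show ?thesis using uniq_step2[OF t1m] by blast
  qed
  have "(SOME X. card (pays_signers B (snt t1) (I i) X i) \<ge> 2*f+1) = m"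
    using someI[of "\<lambda>X. card (pays_signers B (snt t1) (I i) X i) \<ge> 2*f+1", OF cm] un by blast
  then show ?thesis using cm unfolding decision_eq decide_def t1_def by auto
qed

lemma nonimp:
  assumes i1: "i \<ge> 1" and mk: "marked N f B I Cor adv i = None" and pH: "p \<in> H"
    and dec: "decision N f B I Cor adv i p = Marked (Some x)"
  shows "x \<notin> H"
proof
  assume xH: "x \<in> H"
  define t0 where "t0 = 3*(i-1)"
  define t1 where "t1 = 3*(i-1)+1"
  define S2 where "S2 = (if t0 < 2 then {} else snt (t0-2))"
  have hm_t0: "hm t0 = step1_msgs f B H I i S2"
    using hm0[OF t0_facts(1)[OF i1]] t0_facts(2)[OF i1] unfolding S2_def t0_def by simp
  have hm_t1: "hm t1 = step2_msgs N f B H i (snt t0)"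
    using hm1[OF t0_facts(3)[OF i1]] t0_facts(4,5)[OF i1] unfolding t1_def t0_def by simp
  have d: "decide f B (snt t1) p i \<noteq> Unmarked" using dec unfolding decision_eq t1_def by simp
  note dm = decide_marked[OF d]
  have xe: "x = (SOME X. card (pays_signers B (snt t1) p X i) \<ge> 2 * f + 1)"
    using dm dec unfolding decision_eq t1_def by simp
  have c: "card (pays_signers B (snt t1) p x i) \<ge> 2*f+1" using dm xe by simp
  have PSsub: "pays_signers B (snt t1) p x i \<subseteq> B" unfolding pays_signers_def by auto
  obtain b where "b \<in> pays_signers B (snt t1) p x i" "b \<notin> Cor"
    using quorum_inter[OF finB cardB cardBC PSsub PSsub c c] by blast
  then have "(b, p, PaysM x p i) \<in> hm t1" using honest_sent unfolding pays_signers_def by blast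
  then have ne: "cands N f B i (snt t0) b \<noteq> {}"
    and sm: "(SOME y. y \<in> cands N f B i (snt t0) b) = (x, p)"
    unfolding hm_t1 step2_mem by (auto simp: prod_eq_iff)
  have "(x, p) \<in> cands N f B i (snt t0) b" using someI_ex[of "\<lambda>y. y \<in> cands N f B i (snt t0) b"] ne sm by auto
  then obtain pr where "(x, b, Tup (WantPay p i # pr)) \<in> snt t0" unfolding cands_def by blast
  then have "(x, b, Tup (WantPay p i # pr)) \<in> hm t0" using honest_sent xH by blast
  then obtain pr' where hx: "(x, pr') \<in> holders f B H i S2" unfolding hm_t0 step1_mem by blast
  show False
  proof (cases "i = 1")
    case True
    then have "1 \<in> H" using hx unfolding holders_def by (auto split: if_splits)
    then show False using mk True unfolding marked_def honest_def by auto
  next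
    case False
    have S2eq: "S2 = snt (3*(i-1-1)+1)"
      using t0_facts(6)[OF i1 False] unfolding S2_def t0_def by (simp add: algebra_simps)
    obtain q where "(x, pr') = (q, kept_proof f B S2 q (i - 1))" "q \<in> H" "decide f B S2 q (i-1) \<noteq> Unmarked"
      using holders_elem[OF hx False] by blast
    then have "x \<in> honest N Cor" "decision N f B I Cor adv (i - 1) x \<noteq> Unmarked"
      unfolding decision_eq S2eq honest_def by auto
    then show False using mk False unfolding marked_def by (auto split: if_splits)
  qed
qed

end
context ctx begin

lemma kept_nsigs: "sum_list (map nsigs (kept_proof f B S p j)) \<le> card B"
proof -
  define X0 where "X0 = (SOME X. card (pays_signers B S p X j) \<ge> 2 * f + 1)"
  define PS where "PS = pays_signers B S p X0 j"
  have sub: "PS \<subseteq> B" unfolding PS_def pays_signers_def by auto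
  have k: "kept_proof f B S p j = map (\<lambda>b. Sig b (PaysM X0 p j)) (sorted_list_of_set PS)"
    unfolding kept_proof_def Let_def X0_def PS_def ..
  show ?thesis unfolding k sum_sig_list using card_mono[OF finB sub] by simp
qed

lemma complexity:
  assumes i1: "i \<ge> 1"
  shows "finite (round_honest_msgs N f B I Cor adv i) \<and>
         card (round_honest_msgs N f B I Cor adv i) \<le> 18 * (f + 1) \<and>
         round_honest_sigs N f B I Cor adv i \<le> 18 * (f + 1)^2"
proof -
  define t0 where "t0 = 3*(i-1)"
  define t1 where "t1 = 3*(i-1)+1"
  define S2 where "S2 = (if t0 < 2 then {} else snt (t0-2))"
  define R where "R = round_honest_msgs N f B I Cor adv i"
  have hm_t0: "hm t0 = step1_msgs f B H I i S2"
    using hm0[OF t0_facts(1)[OF i1]] t0_facts(2)[OF i1] unfolding S2_def t0_def by simp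
  have hm_t1: "hm t1 = step2_msgs N f B H i (snt t0)"
    using hm1[OF t0_facts(3)[OF i1]] t0_facts(4,5)[OF i1] unfolding t1_def t0_def by simp
  have e2: "t0 + 2 = 2 + (i-1)*3" unfolding t0_def by simp
  have "(t0+2) mod 3 = 2" unfolding e2 mod_mult_self1 by simp
  then have hm_t2: "hm (t0+2) = {}" by (rule hm2)
  have hU: "\<And>a a'. a \<in> holders f B H i S2 \<Longrightarrow> a' \<in> holders f B H i S2 \<Longrightarrow> a = a'"
    using holders_unique_round[OF i1] unfolding S2_def t0_def by blast
  obtain h pr0 where hs: "holders f B H i S2 \<subseteq> {(h, pr0)}"
  proof (cases "holders f B H i S2 = {}")
    case True then show ?thesis using that by blast
  next
    case False
    then obtain a where "a \<in> holders f B H i S2" by blast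
    then have "holders f B H i S2 \<subseteq> {a}" using hU by blast
    then show ?thesis using that by (cases a) blast
  qed
  have s0: "hm t0 \<subseteq> (\<lambda>b. (h, b, Tup (WantPay (I i) i # pr0))) ` B"
  proof
    fix x assume "x \<in> hm t0"
    then obtain a b' m where "x = (a, b', m)" "(a, b', m) \<in> step1_msgs f B H I i S2"
      unfolding hm_t0 by (cases x) auto
    then obtain pr where "(a, pr) \<in> holders f B H i S2" "b' \<in> B" "x = (a, b', Tup (WantPay (I i) i # pr))"
      unfolding step1_mem by blast
    moreover then have "a = h" "pr = pr0" using hs by auto
    ultimately show "x \<in> (\<lambda>b. (h, b, Tup (WantPay (I i) i # pr0))) ` B" by blast
  qed
  define g where "g b = (snd (SOME x. x \<in> cands N f B i (snt t0) b),
      PaysM (fst (SOME x. x \<in> cands N f B i (snt t0) b)) (snd (SOME x. x \<in> cands N f B i (snt t0) b)) i)" for b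
  have s1: "hm t1 \<subseteq> (\<lambda>b. (b, g b)) ` B"
  proof
    fix x assume "x \<in> hm t1"
    then obtain b d m where "x = (b, d, m)" "(b, d, m) \<in> step2_msgs N f B H i (snt t0)"
      unfolding hm_t1 by (cases x) auto
    then show "x \<in> (\<lambda>b. (b, g b)) ` B" unfolding step2_mem g_def by auto
  qed
  have f0: "finite (hm t0)" "card (hm t0) \<le> card B"
    using s0 finB finite_subset card_mono card_image_le
    by (metis finite_imageI, meson card_image_le finite_imageI le_trans finB card_mono)
  have f1: "finite (hm t1)" "card (hm t1) \<le> card B"
    using s1 finB finite_subset
    by (metis finite_imageI, meson card_image_le finite_imageI le_trans finB card_mono)
  have Rsub: "R \<subseteq> Pair t0 ` hm t0 \<union> Pair t1 ` hm t1"
  proof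
    fix x assume "x \<in> R"
    then obtain t s d m where x: "x = (t, s, d, m)" "t \<in> {3 * (i - 1)..<3 * i}"
      "(s, d, m) \<in> snt t" "s \<in> honest N Cor"
      unfolding R_def round_honest_msgs_def by blast
    have hmem: "(s, d, m) \<in> hm t" using x honest_sent unfolding honest_def by blast
    have "t = t0 \<or> t = t1 \<or> t = t0 + 2" using x(2) i1 unfolding t0_def t1_def by auto
    then show "x \<in> Pair t0 ` hm t0 \<union> Pair t1 ` hm t1" using hmem hm_t2 x(1) by auto
  qed
  have finR: "finite R" using Rsub f0 f1 finite_subset by blast
  have "card R \<le> card (Pair t0 ` hm t0 \<union> Pair t1 ` hm t1)"
    using Rsub f0 f1 by (intro card_mono) auto
  also have "\<dots> \<le> card (Pair t0 ` hm t0) + card (Pair t1 ` hm t1)" by (rule card_Un_le)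
  also have "\<dots> \<le> card (hm t0) + card (hm t1)" using card_image_le f0 f1 by (meson add_le_mono)
  also have "\<dots> \<le> 6*f+2" using f0 f1 cardB by linarith
  finally have cR: "card R \<le> 6*f+2" .
  have bnd: "(case x of (t, s, d, m) \<Rightarrow> nsigs (Sig s m)) \<le> 3*f+2" if "x \<in> R" for x
  proof -
    from Rsub that have "x \<in> Pair t0 ` hm t0 \<or> x \<in> Pair t1 ` hm t1" by blast
    then show ?thesis
    proof
      assume "x \<in> Pair t0 ` hm t0"
      then obtain s d m where x: "x = (t0, s, d, m)" "(s, d, m) \<in> hm t0" by auto
      then obtain pr where hp: "(s, pr) \<in> holders f B H i S2" and m: "m = Tup (WantPay (I i) i # pr)"
        unfolding hm_t0 step1_mem by blast
      have "sum_list (map nsigs pr) \<le> card B"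
      proof (cases "i = 1")
        case True then show ?thesis using hp unfolding holders_def by (auto split: if_splits)
      next
        case False
        then obtain p where "(s, pr) = (p, kept_proof f B S2 p (i - 1))"
          using holders_elem[OF hp] by blast
        then show ?thesis using kept_nsigs by simp
      qed
      then show ?thesis using x m cardB by simp
    next
      assume "x \<in> Pair t1 ` hm t1"
      then obtain s d m where x: "x = (t1, s, d, m)" "(s, d, m) \<in> hm t1" by auto
      then obtain X where "m = PaysM X d i" unfolding hm_t1 step2_mem by blast
      then show ?thesis using x by simp
    qed
  qed
  have "round_honest_sigs N f B I Cor adv i \<le> card R * (3*f+2)"
    unfolding round_honest_sigs_def R_def[symmetric]
    using sum_bounded_above[of R "\<lambda>(t, s, d, m). nsigs (Sig s m)" "3*f+2"] bnd by simp
  also have "\<dots> \<le> (6*f+2) * (3*f+2)" using cR by (rule mult_le_mono1)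
  also have "\<dots> \<le> 18 * (f+1)^2" by (simp add: power2_eq_square algebra_simps)
  finally show ?thesis using finR cR unfolding R_def by simp
qed

end

theorem mainTheorem4:
  shows "(\<forall>N f K B I Cor adv. setting_ok N f K B I Cor adv \<longrightarrow>
             marker_solution N f B I Cor adv K) \<and>
         (\<exists>c::nat. \<forall>N f K B I Cor adv i. setting_ok N f K B I Cor adv \<and> i \<in> {1..K} \<longrightarrow>
             finite (round_honest_msgs N f B I Cor adv i) \<and>
             card (round_honest_msgs N f B I Cor adv i) \<le> c * (f + 1) \<and>
             round_honest_sigs N f B I Cor adv i \<le> c * (f + 1)^2)"
proof
  show "\<forall>N f K B I Cor adv. setting_ok N f K B I Cor adv \<longrightarrow> marker_solution N f B I Cor adv K"
  proof (intro allI impI)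
    fix N f K B I Cor adv assume so: "setting_ok N f K B I Cor adv"
    have ao: "adv_ok N f B I Cor adv" using so unfolding setting_ok_def by blast
    have "Cor \<subseteq> {1..N}" "card Cor \<le> f" using ao unfolding adv_ok_def by blast+
    interpret ctx N f B I Cor adv
      using so ao \<open>Cor \<subseteq> {1..N}\<close> \<open>card Cor \<le> f\<close> unfolding setting_ok_def by unfold_locales auto
    show "marker_solution N f B I Cor adv K"
      unfolding marker_solution_def
    proof
      fix i assume "i \<in> {1..K}"
      then have i1: "i \<ge> 1" by simp
      show "card {p\<in>honest N Cor. decision N f B I Cor adv i p \<noteq> Unmarked} \<le> 1 \<and>
        (\<forall>m. marked N f B I Cor adv i = Some m \<and> m \<in> honest N Cor \<and> I i \<in> honest N Cor
              \<longrightarrow> decision N f B I Cor adv i (I i) = Marked (Some m)) \<and>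
        (marked N f B I Cor adv i = None \<longrightarrow>
           (\<forall>p\<in>honest N Cor. \<forall>d. decision N f B I Cor adv i p = Marked d \<longrightarrow>
               (case d of None \<Rightarrow> True | Some x \<Rightarrow> x \<notin> honest N Cor)))"
      proof (intro conjI allI impI ballI)
        show "card {p\<in>honest N Cor. decision N f B I Cor adv i p \<noteq> Unmarked} \<le> 1"
          by (rule consistency)
      next
        fix m assume "marked N f B I Cor adv i = Some m \<and> m \<in> honest N Cor \<and> I i \<in> honest N Cor"
        then show "decision N f B I Cor adv i (I i) = Marked (Some m)"
          using liveness[OF i1] unfolding honest_def by blast
      next
        fix p d assume a: "marked N f B I Cor adv i = None" "p \<in> honest N Cor"
          "decision N f B I Cor adv i p = Marked d"
        show "case d of None \<Rightarrow> True | Some x \<Rightarrow> x \<notin> honest N Cor"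
        proof (cases d)
          case (Some x)
          then show ?thesis using nonimp[OF i1 a(1)] a(2,3) unfolding honest_def by auto
        qed simp
      qed
    qed
  qed
next
  show "\<exists>c::nat. \<forall>N f K B I Cor adv i. setting_ok N f K B I Cor adv \<and> i \<in> {1..K} \<longrightarrow>
             finite (round_honest_msgs N f B I Cor adv i) \<and>
             card (round_honest_msgs N f B I Cor adv i) \<le> c * (f + 1) \<and>
             round_honest_sigs N f B I Cor adv i \<le> c * (f + 1)^2"
  proof (intro exI[of _ 18] allI impI)
    fix N f K B I Cor adv i assume a: "setting_ok N f K B I Cor adv \<and> i \<in> {1..K}"
    have ao: "adv_ok N f B I Cor adv" using a unfolding setting_ok_def by blast
    have "Cor \<subseteq> {1..N}" "card Cor \<le> f" using ao unfolding adv_ok_def by blast+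
    interpret ctx N f B I Cor adv
      using a ao \<open>Cor \<subseteq> {1..N}\<close> \<open>card Cor \<le> f\<close> unfolding setting_ok_def by unfold_locales auto
    show "finite (round_honest_msgs N f B I Cor adv i) \<and>
             card (round_honest_msgs N f B I Cor adv i) \<le> 18 * (f + 1) \<and>
             round_honest_sigs N f B I Cor adv i \<le> 18 * (f + 1)^2"
      using complexity a by simp
  qed
qed

end
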